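(* Let $C$ be a cone in $\mathbb{R}^n$ and let $X$ and $Y$ be nonempty decomposably $C$-antichain-convex subsets of $\mathbb{R}^n$. (1) If $X$ is $C$-upward and $\operatorname{ri}(X)\cap Y=\emptyset$, then $X$ and $Y$ are properly separated. (2) If $X$ is $C$-downward and $\operatorname{ri}(X)\cap Y=\emptyset$, then $X$ and $Y$ are properly separated.
   Context: A cone in $\mathbb{R}^n$ is a subset $C$ with $\lambda C\subseteq C$ for all $\lambda>0$ (possibly empty, need not contain $0$). $S$ is $C$-antichain-convex iff for all $x,y\in S$ and $\lambda\in[0,1]$ with $y-x\notin C\cup(-C)$ one has $\lambda x+(1-\lambda)y\in S$; $S$ is decomposably $C$-antichain-convex iff it is a Minkowski sum of finitely many $C$-antichain-convex sets. $S$ is $C$-upward iff $S+C\subseteq S$; $C$-downward iff $S-C\subseteq S$. $\operatorname{ri}(Z)$ is the relative interior of $Z$ (interior relative to its affine hull). $X$ and $Y$ are properly separated iff there is a linear functional $f$ on $\mathbb{R}^n$ with $\sup f[X]\le\inf f[Y]$ and $\inf f[X]<\sup f[Y]$. *)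

theory Defs
  imports "HOL-Analysis.Analysis"
begin

definition is_cone :: "('a::real_vector) set \<Rightarrow> bool" where
  "is_cone C \<longleftrightarrow> (\<forall>t::real. t > 0 \<longrightarrow> (\<forall>c\<in>C. t *\<^sub>R c \<in> C))"

definition antichain_convex :: "('a::real_vector) set \<Rightarrow> 'a set \<Rightarrow> bool" where
  "antichain_convex C S \<longleftrightarrow>
     (\<forall>x\<in>S. \<forall>y\<in>S. \<forall>t::real. 0 \<le> t \<and> t \<le> 1 \<and> y - x \<notin> C \<union> uminus ` C
        \<longrightarrow> t *\<^sub>R x + (1 - t) *\<^sub>R y \<in> S)"

definition minkowski_sum :: "'i set \<Rightarrow> ('i \<Rightarrow> ('a::real_vector) set) \<Rightarrow> 'a set" where
  "minkowski_sum I S = {\<Sum>i\<in>I. x i | x. \<forall>i\<in>I. x i \<in> S i}"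

definition decomp_antichain_convex :: "('a::real_vector) set \<Rightarrow> 'a set \<Rightarrow> bool" where
  "decomp_antichain_convex C X \<longleftrightarrow>
     (\<exists>(I::nat set) S. finite I \<and> I \<noteq> {} \<and> (\<forall>i\<in>I. antichain_convex C (S i))
        \<and> X = minkowski_sum I S)"

definition upward :: "('a::real_vector) set \<Rightarrow> 'a set \<Rightarrow> bool" where
  "upward C S \<longleftrightarrow> (\<forall>s\<in>S. \<forall>c\<in>C. s + c \<in> S)"

definition downward :: "('a::real_vector) set \<Rightarrow> 'a set \<Rightarrow> bool" where
  "downward C S \<longleftrightarrow> (\<forall>s\<in>S. \<forall>c\<in>C. s - c \<in> S)"

definition properly_separated :: "('a::real_vector) set \<Rightarrow> 'a set \<Rightarrow> bool" where
  "properly_separated X Y \<longleftrightarrow>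
     (\<exists>f::'a \<Rightarrow> real. linear f
        \<and> (SUP x\<in>X. ereal (f x)) \<le> (INF y\<in>Y. ereal (f y))
        \<and> (INF x\<in>X. ereal (f x)) < (SUP y\<in>Y. ereal (f y)))"

end

theory Submission
  imports Defs
begin

lemma L0:
  fixes C K S :: "'a::real_vector set"
  assumes cone: "is_cone C" and K0: "0 \<in> K" and CK: "C \<subseteq> K"
    and ac: "antichain_convex C S" and a: "a \<in> S" and b: "b \<in> S"
    and t: "0 \<le> t" "t \<le> 1"
  shows "\<exists>k\<in>K. t *\<^sub>R a + (1-t) *\<^sub>R b + k \<in> S"
proof (cases "b - a \<in> C \<union> uminus ` C")
  case False
  then have "t *\<^sub>R a + (1-t) *\<^sub>R b \<in> S" using ac a b t unfolding antichain_convex_def by blast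
  then have "t *\<^sub>R a + (1-t) *\<^sub>R b + 0 \<in> S" by simp
  then show ?thesis using K0 by blast
next
  case True
  then consider "b - a \<in> C" | "a - b \<in> C"
  proof (elim UnE)
    assume "b - a \<in> uminus ` C"
    then obtain c where "c \<in> C" "b - a = - c" by blast
    then have "a - b \<in> C" by (metis minus_diff_eq minus_minus)
    moreover assume "a - b \<in> C \<Longrightarrow> thesis"
    ultimately show thesis by blast
  qed
  then show ?thesis
  proof cases
    case 1
    show ?thesis
    proof (cases "t = 0")
      case True then show ?thesis using K0 b by (intro bexI[of _ 0]) auto
    next
      case False
      then have "t > 0" using t by simp
      then have "t *\<^sub>R (b - a) \<in> C" using 1 cone unfolding is_cone_def by blast
      moreover have "t *\<^sub>R a + (1-t) *\<^sub>R b + t *\<^sub>R (b - a) = b" by (simp add: algebra_simps)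
      ultimately show ?thesis using CK b by (metis subsetD)
    qed
  next
    case 2
    show ?thesis
    proof (cases "t = 1")
      case True then show ?thesis using K0 a by (intro bexI[of _ 0]) auto
    next
      case False
      then have "1 - t > 0" using t by simp
      then have "(1-t) *\<^sub>R (a - b) \<in> C" using 2 cone unfolding is_cone_def by blast
      moreover have "t *\<^sub>R a + (1-t) *\<^sub>R b + (1-t) *\<^sub>R (a - b) = a" by (simp add: algebra_simps)
      ultimately show ?thesis using CK a by (metis subsetD)
    qed
  qed
qed

lemma sum_in_K:
  assumes "finite I" "0 \<in> K" "\<forall>a\<in>K. \<forall>b\<in>K. a+b \<in> K" "\<forall>i\<in>I. f i \<in> K"
  shows "sum f I \<in> K"
  using assms by (induction I rule: finite_induct) auto

lemma L1:
  fixes C K :: "'a::real_vector set"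
  assumes cone: "is_cone C" and K0: "0 \<in> K" and Kadd: "\<forall>a\<in>K. \<forall>b\<in>K. a+b \<in> K" and CK: "C \<subseteq> K"
    and fin: "finite I" and ac: "\<forall>i\<in>I. antichain_convex C (S i)"
    and y1: "y1 \<in> minkowski_sum I S" and y2: "y2 \<in> minkowski_sum I S" and t: "0 \<le> t" "t \<le> 1"
  shows "\<exists>k\<in>K. t *\<^sub>R y1 + (1-t) *\<^sub>R y2 + k \<in> minkowski_sum I S"
proof -
  obtain a where a: "y1 = (\<Sum>i\<in>I. a i)" "\<forall>i\<in>I. a i \<in> S i" using y1 unfolding minkowski_sum_def by blast
  obtain b where b: "y2 = (\<Sum>i\<in>I. b i)" "\<forall>i\<in>I. b i \<in> S i" using y2 unfolding minkowski_sum_def by blast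
  have ex: "\<forall>i\<in>I. \<exists>k. k \<in> K \<and> t *\<^sub>R a i + (1-t) *\<^sub>R b i + k \<in> S i"
    using L0[OF cone K0 CK] ac a b t by blast
  obtain kk where kk: "\<forall>i\<in>I. kk i \<in> K \<and> t *\<^sub>R a i + (1-t) *\<^sub>R b i + kk i \<in> S i"
    using bchoice[OF ex] by blast
  have "sum kk I \<in> K" using sum_in_K[OF fin K0 Kadd] kk by blast
  moreover have "t *\<^sub>R y1 + (1-t) *\<^sub>R y2 + sum kk I = (\<Sum>i\<in>I. t *\<^sub>R a i + (1-t) *\<^sub>R b i + kk i)"
    by (simp add: a b sum.distrib scaleR_sum_right)
  moreover have "(\<Sum>i\<in>I. t *\<^sub>R a i + (1-t) *\<^sub>R b i + kk i) \<in> minkowski_sum I S"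
    unfolding minkowski_sum_def
  proof (rule CollectI, rule exI[of _ "\<lambda>i. t *\<^sub>R a i + (1-t) *\<^sub>R b i + kk i"], rule conjI)
    show "\<forall>i\<in>I. t *\<^sub>R a i + (1-t) *\<^sub>R b i + kk i \<in> S i" using kk by blast
  qed simp
  ultimately have "t *\<^sub>R y1 + (1-t) *\<^sub>R y2 + sum kk I \<in> minkowski_sum I S" by (simp only:)
  then show ?thesis using \<open>sum kk I \<in> K\<close> by blast
qed


lemma sym_ac: "antichain_convex (uminus ` C) S = antichain_convex C S"
proof -
  have e: "uminus ` uminus ` C = C" by (simp add: image_image)
  have "uminus ` C \<union> uminus ` uminus ` C = C \<union> uminus ` C" unfolding e by (rule Un_commute)
  then show ?thesis unfolding antichain_convex_def by (simp only:)
qed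

lemma sym_cone: "is_cone C \<Longrightarrow> is_cone (uminus ` C)"
  unfolding is_cone_def
proof (intro allI impI ballI)
  fix t :: real and c
  assume h: "\<forall>t>0. \<forall>c\<in>C. t *\<^sub>R c \<in> C" and t: "0 < t" and c: "c \<in> uminus ` C"
  then obtain d where d: "d \<in> C" "c = - d" by blast
  then have "t *\<^sub>R d \<in> C" using h t by blast
  then show "t *\<^sub>R c \<in> uminus ` C" using d by (metis image_eqI scaleR_minus_right)
qed

lemma sym_decomp: "decomp_antichain_convex (uminus ` C) X = decomp_antichain_convex C X"
  unfolding decomp_antichain_convex_def sym_ac ..

lemma sym_up: "upward (uminus ` C) X = downward C X"
  unfolding upward_def downward_def
proof (intro iffI ballI)
  fix x c assume h: "\<forall>s\<in>X. \<forall>c\<in>uminus ` C. s + c \<in> X" and x: "x \<in> X" and c: "c \<in> C"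
  have "- c \<in> uminus ` C" using c by (rule imageI)
  then have "x + - c \<in> X" using h x by blast
  then show "x - c \<in> X" by simp
next
  fix x c assume h: "\<forall>s\<in>X. \<forall>c\<in>C. s - c \<in> X" and x: "x \<in> X" and c: "c \<in> uminus ` C"
  then obtain d where d: "d \<in> C" "c = - d" by blast
  have "x - d \<in> X" using h x d(1) by blast
  then show "x + c \<in> X" using d(2) by simp
qed

lemma X_convex:
  fixes C X :: "'a::real_vector set"
  assumes cone: "is_cone C" and d: "decomp_antichain_convex C X" and up: "upward C X"
  shows "convex X"
proof -
  obtain I :: "nat set" and S where IS0: "finite I" "\<forall>i\<in>I. antichain_convex C (S i)" "X = minkowski_sum I S"
    using d unfolding decomp_antichain_convex_def by blast
  have IS2: "\<forall>i\<in>I. antichain_convex (uminus ` C) (S i)" using IS0(2) by (simp add: sym_ac)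
  note IS = IS0(1) IS2 IS0(3)
  define K where "K = {k. \<forall>x\<in>X. x - k \<in> X}"
  have K0: "0 \<in> K" unfolding K_def by simp
  have Kadd: "\<forall>a\<in>K. \<forall>b\<in>K. a+b \<in> K"
  proof (intro ballI)
    fix a b assume a: "a \<in> K" and b: "b \<in> K"
    show "a + b \<in> K" unfolding K_def
    proof (intro CollectI ballI)
      fix x assume "x \<in> X"
      then have "x - a \<in> X" using a unfolding K_def by blast
      then have "x - a - b \<in> X" using b unfolding K_def by blast
      then show "x - (a + b) \<in> X" by (simp add: diff_diff_eq)
    qed
  qed
  have CK: "uminus ` C \<subseteq> K" using up unfolding K_def upward_def by auto
  show ?thesis 
  proof (rule convexI)
    fix x y :: 'a and u v :: real
    assume x: "x \<in> X" and y: "y \<in> X" and uv0: "0 \<le> u" "0 \<le> v" "u + v = 1"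
    hence uv: "0 \<le> u \<and> 0 \<le> v \<and> u + v = 1" by simp
    then obtain k where k: "k \<in> K" "u *\<^sub>R x + (1-u) *\<^sub>R y + k \<in> X"
      using L1[OF sym_cone[OF cone] K0 Kadd CK IS(1) IS(2), of x y u] IS(3) x y uv by auto
    have "u *\<^sub>R x + v *\<^sub>R y = (u *\<^sub>R x + (1-u) *\<^sub>R y + k) - k" using uv by simp
    moreover have "(u *\<^sub>R x + (1-u) *\<^sub>R y + k) - k \<in> X" using k unfolding K_def by blast
    ultimately show "u *\<^sub>R x + v *\<^sub>R y \<in> X" by (simp only:)
  qed
qed

lemma ri_shift:
  fixes X :: "'a::euclidean_space set"
  assumes "convex X" "\<forall>x\<in>X. x + k \<in> X" "x \<in> rel_interior X"
  shows "x + k \<in> rel_interior X"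
proof (cases "k = 0")
  case True then show ?thesis using assms by simp
next
  case False
  have xX: "x \<in> X" using assms(3) rel_interior_subset by blast
  then have "x + k + k \<in> X" using assms(2) by blast
  moreover have "x + 2 *\<^sub>R k = x + k + k" by (simp add: scaleR_2 add.assoc)
  ultimately have "x + 2 *\<^sub>R k \<in> X" by (simp only:)
  then have c: "x + 2 *\<^sub>R k \<in> closure X" using closure_subset by (rule subsetD[rotated])
  have "midpoint x (x + 2 *\<^sub>R k) \<in> open_segment x (x + 2 *\<^sub>R k)" using False by simp
  moreover have "midpoint x (x + 2 *\<^sub>R k) = x + k"
  proof -
    have "x + (x + 2 *\<^sub>R k) = 2 *\<^sub>R (x + k)" by (simp add: scaleR_2 algebra_simps)
    then show ?thesis by (simp add: midpoint_def)
  qed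
  ultimately show ?thesis using rel_interior_closure_convex_segment[OF assms(1) assms(3) c] by auto
qed

lemma Sep:
  fixes X Y :: "'a::euclidean_space set"
  assumes cx: "convex X" and X: "X \<noteq> {}" and Y: "Y \<noteq> {}"
    and dis: "rel_interior X \<inter> convex hull Y = {}"
  shows "properly_separated X Y"
proof -
  define D where "D = (\<Union>y\<in> convex hull Y. \<Union>x \<in> rel_interior X. {y - x})"
  have cD: "convex D" unfolding D_def by (rule convex_differences[OF convex_convex_hull convex_rel_interior[OF cx]])
  have riX: "rel_interior X \<noteq> {}" using rel_interior_eq_empty[OF cx] X by simp
  have "convex hull Y \<noteq> {}" using Y by simp
  then have nD: "D \<noteq> {}" using riX unfolding D_def by blast
  have zD: "0 \<notin> D"
  proof
    assume "0 \<in> D"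
    then obtain y x where "y \<in> convex hull Y" "x \<in> rel_interior X" "0 = y - x" unfolding D_def by blast
    then have "x \<in> rel_interior X \<inter> convex hull Y" by simp
    then show False using dis by blast
  qed
  obtain a where a: "a \<in> span D" "a \<noteq> 0" "\<And>d. d \<in> D \<Longrightarrow> 0 \<le> a \<bullet> d"
    using separating_hyperplane_set_0_inspan[OF cD nD zD] by blast
  have ge: "a \<bullet> x \<le> a \<bullet> y" if "x \<in> rel_interior X" "y \<in> convex hull Y" for x y
  proof -
    have "y - x \<in> D" unfolding D_def using that by blast
    then have "0 \<le> a \<bullet> (y - x)" by (rule a(3))
    then show ?thesis by (simp add: inner_diff_right)
  qed
  have i: "a \<bullet> x \<le> a \<bullet> y" if x: "x \<in> X" and y: "y \<in> Y" for x y
  proof -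
    have yh: "y \<in> convex hull Y" using y by (rule hull_inc)
    have "rel_interior X \<subseteq> {z. a \<bullet> z \<le> a \<bullet> y}" using ge[OF _ yh] by blast
    then have "closure (rel_interior X) \<subseteq> {z. a \<bullet> z \<le> a \<bullet> y}"
      by (rule closure_minimal) (rule closed_halfspace_le)
    then have "closure X \<subseteq> {z. a \<bullet> z \<le> a \<bullet> y}" using convex_closure_rel_interior[OF cx] by simp
    then show ?thesis using x closure_subset by (meson subsetD mem_Collect_eq)
  qed
  have ii: "\<exists>x\<in>X. \<exists>y\<in>Y. a \<bullet> x < a \<bullet> y"
  proof (rule ccontr)
    assume "\<not> ?thesis"
    then have h: "\<forall>x\<in>X. \<forall>y\<in>Y. a \<bullet> y \<le> a \<bullet> x" by (meson not_less)
    have "orthogonal a d" if dD: "d \<in> D" for d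
    proof -
      obtain y x where yx: "y \<in> convex hull Y" "x \<in> rel_interior X" "d = y - x"
        using dD unfolding D_def by blast
      have xX: "x \<in> X" using yx(2) rel_interior_subset by blast
      have "convex hull Y \<subseteq> {z. a \<bullet> z \<le> a \<bullet> x}"
      proof (rule hull_minimal)
        show "Y \<subseteq> {z. a \<bullet> z \<le> a \<bullet> x}" using h xX by blast
        show "convex {z. a \<bullet> z \<le> a \<bullet> x}" by (rule convex_halfspace_le)
      qed
      then have "a \<bullet> y \<le> a \<bullet> x" using yx by blast
      moreover have "a \<bullet> x \<le> a \<bullet> y" using ge yx by blast
      ultimately show ?thesis using yx by (simp add: orthogonal_def inner_diff_right)
    qed
    then have "orthogonal a a" by (rule orthogonal_to_span[OF a(1)])
    then show False using a(2) by (simp add: orthogonal_def)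
  qed
  then obtain x0 y0 where x0: "x0 \<in> X" and y0: "y0 \<in> Y" and lt: "a \<bullet> x0 < a \<bullet> y0" by blast
  show ?thesis unfolding properly_separated_def
  proof (intro exI[of _ "\<lambda>z. a \<bullet> z"] conjI)
    show "linear ((\<bullet>) a)" by (rule bounded_linear.linear[OF bounded_linear_inner_right])
    show "(SUP x\<in>X. ereal (a \<bullet> x)) \<le> (INF y\<in>Y. ereal (a \<bullet> y))"
      by (intro SUP_least INF_greatest) (use i in auto)
    have "(INF x\<in>X. ereal (a \<bullet> x)) \<le> ereal (a \<bullet> x0)" using x0 by (rule INF_lower)
    also have "\<dots> < ereal (a \<bullet> y0)" using lt by simp
    also have "\<dots> \<le> (SUP y\<in>Y. ereal (a \<bullet> y))" using y0 by (rule SUP_upper)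
    finally show "(INF x\<in>X. ereal (a \<bullet> x)) < (SUP y\<in>Y. ereal (a \<bullet> y))" .
  qed
qed

lemma Main_up:
  fixes C X Y :: "'a::euclidean_space set"
  assumes cone: "is_cone C" and X: "X \<noteq> {}" and Y: "Y \<noteq> {}"
    and dX: "decomp_antichain_convex C X" and dY: "decomp_antichain_convex C Y"
    and up: "upward C X" and dis: "rel_interior X \<inter> Y = {}"
  shows "properly_separated X Y"
proof -
  have cx: "convex X" using X_convex[OF cone dX up] .
  obtain I :: "nat set" and S where IS: "finite I" "\<forall>i\<in>I. antichain_convex C (S i)" "Y = minkowski_sum I S"
    using dY unfolding decomp_antichain_convex_def by blast
  define K where "K = {k. \<forall>x\<in>X. x + k \<in> X}"
  have K0: "0 \<in> K" unfolding K_def by simp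
  have Kadd: "\<forall>a\<in>K. \<forall>b\<in>K. a+b \<in> K"
  proof (intro ballI)
    fix a b assume a: "a \<in> K" and b: "b \<in> K"
    show "a + b \<in> K" unfolding K_def
    proof (intro CollectI ballI)
      fix x assume "x \<in> X"
      then have "x + a \<in> X" using a unfolding K_def by blast
      then have "x + a + b \<in> X" using b unfolding K_def by blast
      then show "x + (a + b) \<in> X" by (simp add: add.assoc)
    qed
  qed
  have CK: "C \<subseteq> K" using up unfolding K_def upward_def by auto
  have cK: "convex K" 
  proof (rule convexI)
    fix k1 k2 :: 'a and u v :: real
    assume k: "k1 \<in> K" "k2 \<in> K" and uv0: "0 \<le> u" "0 \<le> v" "u + v = 1"
    hence uv: "0 \<le> u \<and> 0 \<le> v \<and> u + v = 1" by simp
    show "u *\<^sub>R k1 + v *\<^sub>R k2 \<in> K" unfolding K_def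
    proof (intro CollectI ballI)
      fix x assume x: "x \<in> X"
      have "x + (u *\<^sub>R k1 + v *\<^sub>R k2) = u *\<^sub>R (x + k1) + v *\<^sub>R (x + k2)"
      proof -
        have "x = u *\<^sub>R x + v *\<^sub>R x" using uv by (metis scaleR_add_left scaleR_one)
        then show ?thesis by (simp add: algebra_simps)
      qed
      moreover have "x + k1 \<in> X" "x + k2 \<in> X" using k x unfolding K_def by auto
      ultimately show "x + (u *\<^sub>R k1 + v *\<^sub>R k2) \<in> X" using cx uv unfolding convex_def by metis
    qed
  qed
  define T where "T = {z. \<exists>k\<in>K. z + k \<in> Y}"
  have YT: "Y \<subseteq> T"
  proof
    fix y assume "y \<in> Y"
    then have "y + 0 \<in> Y" by simp
    then show "y \<in> T" unfolding T_def using K0 by blast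
  qed
  have cT: "convex T" 
  proof (rule convexI)
    fix z1 z2 :: 'a and u v :: real
    assume z: "z1 \<in> T" "z2 \<in> T" and uv0: "0 \<le> u" "0 \<le> v" "u + v = 1"
    hence uv: "0 \<le> u \<and> 0 \<le> v \<and> u + v = 1" by simp
    obtain k1 k2 where k: "k1 \<in> K" "k2 \<in> K" "z1 + k1 \<in> Y" "z2 + k2 \<in> Y"
      using z unfolding T_def by blast
    obtain k where kk: "k \<in> K" "u *\<^sub>R (z1 + k1) + (1-u) *\<^sub>R (z2 + k2) + k \<in> Y"
      using L1[OF cone K0 Kadd CK IS(1) IS(2), of "z1 + k1" "z2 + k2" u] IS(3) k uv by auto
    have "u *\<^sub>R k1 + v *\<^sub>R k2 \<in> K" using cK k uv unfolding convex_def by blast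
    then have kin: "u *\<^sub>R k1 + v *\<^sub>R k2 + k \<in> K" using Kadd kk by blast
    have "u *\<^sub>R (z1 + k1) + (1-u) *\<^sub>R (z2 + k2) + k = (u *\<^sub>R z1 + v *\<^sub>R z2) + (u *\<^sub>R k1 + v *\<^sub>R k2 + k)"
    proof -
      have vv: "v = 1 - u" using uv by simp
      show ?thesis unfolding vv by (simp add: algebra_simps)
    qed
    then have "(u *\<^sub>R z1 + v *\<^sub>R z2) + (u *\<^sub>R k1 + v *\<^sub>R k2 + k) \<in> Y" using kk(2) by (simp only:)
    then show "u *\<^sub>R z1 + v *\<^sub>R z2 \<in> T" unfolding T_def using kin by blast
  qed
  have hT: "convex hull Y \<subseteq> T" using hull_minimal[of Y T convex] YT cT by blast
  have "rel_interior X \<inter> convex hull Y = {}"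
  proof (rule ccontr)
    assume "\<not> ?thesis"
    then obtain z where z: "z \<in> rel_interior X" "z \<in> convex hull Y" by blast
    then have "z \<in> T" using hT by (rule_tac subsetD)
    then obtain k where k: "k \<in> K" "z + k \<in> Y" unfolding T_def by blast
    have kX: "\<forall>x\<in>X. x + k \<in> X" using k(1) unfolding K_def by simp
    have "z + k \<in> rel_interior X" by (rule ri_shift[OF cx kX z(1)])
    then show False using k(2) dis by (simp add: disjoint_iff)
  qed
  then show ?thesis by (rule Sep[OF cx X Y])
qed

theorem corollary4:
  fixes C X Y :: "(real ^ 'n) set"
  assumes "is_cone C"
    and "X \<noteq> {}" and "Y \<noteq> {}"
    and "decomp_antichain_convex C X" and "decomp_antichain_convex C Y"
  shows "(upward C X \<and> rel_interior X \<inter> Y = {} \<longrightarrow> properly_separated X Y)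
       \<and> (downward C X \<and> rel_interior X \<inter> Y = {} \<longrightarrow> properly_separated X Y)"
proof (intro conjI impI)
  assume "upward C X \<and> rel_interior X \<inter> Y = {}"
  then show "properly_separated X Y" using Main_up[OF assms] by (elim conjE)
next
  assume h: "downward C X \<and> rel_interior X \<inter> Y = {}"
  show "properly_separated X Y"
  proof (rule Main_up[OF sym_cone[OF assms(1)] assms(2,3)])
    show "decomp_antichain_convex (uminus ` C) X" unfolding sym_decomp by (rule assms(4))
    show "decomp_antichain_convex (uminus ` C) Y" unfolding sym_decomp by (rule assms(5))
    show "upward (uminus ` C) X" unfolding sym_up using h by (elim conjE)
    show "rel_interior X \<inter> Y = {}" using h by (elim conjE)
  qed
qed

end
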